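(* Let $\mathcal{H}$ be a separable Hilbert space, $\epsilon_1,\ldots,\epsilon_n$ $\mathcal{H}$-valued random elements with $E\|\epsilon_i\|^2<\infty$, $W_{n1},\ldots,W_{nn}\ge0$ deterministic weights, $\eta_i=W_{ni}\epsilon_i$, $S_n=\sum_{i=1}^n\eta_i$, $\mathcal{G}_i=\sigma(\epsilon_1,\ldots,\epsilon_i)$ ($\mathcal{G}_0$ trivial), and $m\ge1$ an integer. For $1\le i\le n$ let $T_i=S_n-\sum_{j=i}^{\min(i+m-1,n)}\eta_j$ and $d_i=E[\|S_n\|\mid\mathcal{G}_i]-E[\|S_n\|\mid\mathcal{G}_{i-1}]-E[\|T_i\|\mid\mathcal{G}_i]+E[\|T_i\|\mid\mathcal{G}_{i-1}]$. Then $|d_i|\le\sum_{j=i}^{i+m-1}E(\|\eta_j\|\mid\mathcal{G}_i)+\sum_{j=i}^{i+m-1}E(\|\eta_j\|\mid\mathcal{G}_{i-1})$ and $E(d_i^2\mid\mathcal{G}_{i-1})\le m\sum_{j=i}^{i+m-1}E(\|\eta_j\|^2\mid\mathcal{G}_{i-1})$, where sums over $j$ are truncated at $n$. *)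

theory Defs
  imports "HOL-Probability.Probability"
begin

definition nat_filtration :: "'a measure \<Rightarrow> (nat \<Rightarrow> 'a \<Rightarrow> 'h::topological_space) \<Rightarrow> nat \<Rightarrow> 'a measure" where
  "nat_filtration M eps i =
     sigma (space M) (\<Union>j\<in>{1..i}. {eps j -` A \<inter> space M | A. A \<in> sets borel})"

end

theory Submission imports Defs begin

lemma abs_le_1_sq: "\<bar>y::real\<bar> \<le> 1 + y\<^sup>2"
proof -
  have "0 \<le> (\<bar>y\<bar> - 1)\<^sup>2" by simp
  then have "2 * \<bar>y\<bar> \<le> 1 + \<bar>y\<bar>\<^sup>2" by (simp add: power2_eq_square algebra_simps)
  then show ?thesis by simp
qed

context sigma_finite_subalgebra
begin

lemma ce_abs_bound:
  assumes Xi: "integrable M X" and Zi: "integrable M Z"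
    and b: "\<And>x. x \<in> space M \<Longrightarrow> \<bar>X x\<bar> \<le> Z x"
  shows "AE x in M. \<bar>real_cond_exp M F X x\<bar> \<le> real_cond_exp M F Z x"
proof -
  have "AE x in M. real_cond_exp M F X x \<le> real_cond_exp M F Z x"
    using b by (intro real_cond_exp_mono AE_I2 Xi Zi integrable_mult_right) (force simp: abs_le_iff)+
  moreover have "AE x in M. real_cond_exp M F (\<lambda>x. (-1) * Z x) x \<le> real_cond_exp M F X x"
    using b by (intro real_cond_exp_mono AE_I2 Xi Zi integrable_mult_right) (force simp: abs_le_iff)+
  moreover have "AE x in M. real_cond_exp M F (\<lambda>x. (-1) * Z x) x = (-1) * real_cond_exp M F Z x"
    by (rule real_cond_exp_cmult[OF Zi])
  ultimately show ?thesis by eventually_elim auto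
qed

lemma ce_sum':
  assumes "\<And>j. j \<in> J \<Longrightarrow> integrable M (Y j)"
  shows "AE x in M. real_cond_exp M F (\<lambda>x. \<Sum>j\<in>J. Y j x) x = (\<Sum>j\<in>J. real_cond_exp M F (Y j) x)"
proof -
  define Y' where "Y' j = (if j \<in> J then Y j else (\<lambda>_. 0))" for j
  have "\<And>j. integrable M (Y' j)" using assms by (auto simp: Y'_def)
  then have "AE x in M. real_cond_exp M F (\<lambda>x. \<Sum>j\<in>J. Y' j x) x = (\<Sum>j\<in>J. real_cond_exp M F (Y' j) x)"
    by (rule real_cond_exp_sum)
  moreover have "(\<lambda>x. \<Sum>j\<in>J. Y' j x) = (\<lambda>x. \<Sum>j\<in>J. Y j x)" by (auto simp: Y'_def)
  moreover have "\<And>x. (\<Sum>j\<in>J. real_cond_exp M F (Y' j) x) = (\<Sum>j\<in>J. real_cond_exp M F (Y j) x)"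
    by (rule sum.cong) (auto simp: Y'_def)
  ultimately show ?thesis by simp
qed

end


lemma abstract_bound:
  fixes M F G :: "'a measure" and s t :: "'a \<Rightarrow> real" and Y :: "nat \<Rightarrow> 'a \<Rightarrow> real"
  assumes P: "prob_space M" and MG: "subalgebra M G" and GF: "subalgebra G F"
    and fin: "finite J" and cardJ: "card J \<le> m"
    and Ym: "\<And>j. j\<in>J \<Longrightarrow> Y j \<in> borel_measurable M"
    and Ysq: "\<And>j. j\<in>J \<Longrightarrow> integrable M (\<lambda>x. (Y j x)\<^sup>2)"
    and si: "integrable M s" and ti: "integrable M t"
    and st: "\<And>x. x \<in> space M \<Longrightarrow> \<bar>s x - t x\<bar> \<le> (\<Sum>j\<in>J. Y j x)"
  shows "(AE x in M. \<bar>real_cond_exp M G s x - real_cond_exp M F s x - real_cond_exp M G t x + real_cond_exp M F t x\<bar>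
            \<le> (\<Sum>j\<in>J. real_cond_exp M G (Y j) x) + (\<Sum>j\<in>J. real_cond_exp M F (Y j) x))
       \<and> (AE x in M. real_cond_exp M F (\<lambda>y. (real_cond_exp M G s y - real_cond_exp M F s y - real_cond_exp M G t y + real_cond_exp M F t y)\<^sup>2) x
            \<le> real m * (\<Sum>j\<in>J. real_cond_exp M F (\<lambda>y. (Y j y)\<^sup>2) x))"
proof -
  interpret P: prob_space M by (rule P)
  have MF: "subalgebra M F" using MG GF unfolding subalgebra_def by auto
  have "finite_measure_subalgebra M G"
    unfolding finite_measure_subalgebra_def finite_measure_subalgebra_axioms_def
    using P.finite_measure_axioms MG by simp
  then interpret G: finite_measure_subalgebra M G .
  have "finite_measure_subalgebra M F"
    unfolding finite_measure_subalgebra_def finite_measure_subalgebra_axioms_def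
    using P.finite_measure_axioms MF by simp
  then interpret F: finite_measure_subalgebra M F .
  define X where "X x = s x - t x" for x
  define Z where "Z x = (\<Sum>j\<in>J. Y j x)" for x
  have Yi: "integrable M (Y j)" if "j \<in> J" for j
    by (rule Bochner_Integration.integrable_bound[of _ "\<lambda>x. 1 + (Y j x)\<^sup>2"]) 
       (use that Ym Ysq abs_le_1_sq in \<open>auto intro!: AE_I2\<close>)
  have Zi: "integrable M Z" unfolding Z_def using Yi by auto
  have Xi: "integrable M X" unfolding X_def using si ti by auto
  have [measurable]: "X \<in> borel_measurable M" "Z \<in> borel_measurable M" using Xi Zi by auto
  have XZ: "\<bar>X x\<bar> \<le> Z x" if "x \<in> space M" for x using st[OF that] by (simp add: X_def Z_def)
  have Z2: "(Z x)\<^sup>2 \<le> real m * (\<Sum>j\<in>J. (Y j x)\<^sup>2)" for x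
  proof -
    have "(Z x)\<^sup>2 \<le> (\<Sum>j\<in>J. (Y j x)\<^sup>2) * card J" unfolding Z_def by (rule sum_squared_le_sum_of_squares)
    also have "\<dots> \<le> (\<Sum>j\<in>J. (Y j x)\<^sup>2) * m"
      by (rule mult_left_mono) (use cardJ in \<open>auto intro: sum_nonneg\<close>)
    finally show ?thesis by (simp add: mult.commute)
  qed
  have SYi: "integrable M (\<lambda>x. real m * (\<Sum>j\<in>J. (Y j x)\<^sup>2))" using Ysq by auto
  have X2: "(X x)\<^sup>2 \<le> real m * (\<Sum>j\<in>J. (Y j x)\<^sup>2)" if "x \<in> space M" for x
  proof -
    have "(X x)\<^sup>2 \<le> (Z x)\<^sup>2" using power_mono[OF XZ[OF that] abs_ge_zero, of 2] by simp
    then show ?thesis using Z2[of x] by linarith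
  qed
  have X2i: "integrable M (\<lambda>x. (X x)\<^sup>2)"
    by (rule Bochner_Integration.integrable_bound[OF SYi]) (use X2 in \<open>auto intro!: AE_I2 simp del: abs_mult intro: order_trans[OF _ abs_ge_self]\<close>)
  have dG: "AE x in M. real_cond_exp M G s x - real_cond_exp M G t x = real_cond_exp M G X x"
    using G.real_cond_exp_diff[OF si ti] unfolding X_def by (auto elim: AE_mp)
  have dF: "AE x in M. real_cond_exp M F s x - real_cond_exp M F t x = real_cond_exp M F X x"
    using F.real_cond_exp_diff[OF si ti] unfolding X_def by (auto elim: AE_mp)
  have aG: "AE x in M. \<bar>real_cond_exp M G X x\<bar> \<le> real_cond_exp M G Z x"
    by (rule G.ce_abs_bound[OF Xi Zi XZ])
  have aF: "AE x in M. \<bar>real_cond_exp M F X x\<bar> \<le> real_cond_exp M F Z x"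
    by (rule F.ce_abs_bound[OF Xi Zi XZ])
  have sG: "AE x in M. real_cond_exp M G Z x = (\<Sum>j\<in>J. real_cond_exp M G (Y j) x)"
    unfolding Z_def by (rule G.ce_sum'[OF Yi])
  have sF: "AE x in M. real_cond_exp M F Z x = (\<Sum>j\<in>J. real_cond_exp M F (Y j) x)"
    unfolding Z_def by (rule F.ce_sum'[OF Yi])
  have part1: "AE x in M. \<bar>real_cond_exp M G s x - real_cond_exp M F s x - real_cond_exp M G t x + real_cond_exp M F t x\<bar>
            \<le> (\<Sum>j\<in>J. real_cond_exp M G (Y j) x) + (\<Sum>j\<in>J. real_cond_exp M F (Y j) x)"
    using dG dF aG aF sG sF by eventually_elim linarith
  define A where "A = real_cond_exp M G X"
  define B where "B = real_cond_exp M F X"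
  have [measurable]: "A \<in> borel_measurable M" "B \<in> borel_measurable M" "B \<in> borel_measurable F"
    unfolding A_def B_def by auto
  have A2i: "integrable M (\<lambda>x. (A x)\<^sup>2)" unfolding A_def
    by (rule G.integrable_convex_cond_exp[OF Xi _ _ X2i convex_power2]) auto
  have B2i: "integrable M (\<lambda>x. (B x)\<^sup>2)" unfolding B_def
    by (rule F.integrable_convex_cond_exp[OF Xi _ _ X2i convex_power2]) auto
  have BAi: "integrable M (\<lambda>x. (2 * B x) * A x)"
  proof (rule Bochner_Integration.integrable_bound[of _ "\<lambda>x. (A x)\<^sup>2 + (B x)\<^sup>2"])
    show "integrable M (\<lambda>x. (A x)\<^sup>2 + (B x)\<^sup>2)" using A2i B2i by auto
    show "AE x in M. norm (2 * B x * A x) \<le> norm ((A x)\<^sup>2 + (B x)\<^sup>2)"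
    proof (intro AE_I2)
      fix x
      have "0 \<le> (\<bar>A x\<bar> - \<bar>B x\<bar>)\<^sup>2" by simp
      then show "norm (2 * B x * A x) \<le> norm ((A x)\<^sup>2 + (B x)\<^sup>2)"
        by (simp add: power2_eq_square abs_mult algebra_simps)
    qed
  qed auto
  define d where "d y = real_cond_exp M G s y - real_cond_exp M F s y - real_cond_exp M G t y + real_cond_exp M F t y" for y
  have [measurable]: "d \<in> borel_measurable M" unfolding d_def by auto
  have dAB: "AE y in M. (d y)\<^sup>2 = (A y)\<^sup>2 + (B y)\<^sup>2 - (2 * B y) * A y"
    using dG dF by eventually_elim (simp add: d_def A_def B_def power2_eq_square algebra_simps)
  have e1: "AE x in M. real_cond_exp M F (\<lambda>y. (d y)\<^sup>2) x = real_cond_exp M F (\<lambda>y. (A y)\<^sup>2 + (B y)\<^sup>2 - (2 * B y) * A y) x"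
    by (rule F.real_cond_exp_cong[OF dAB]) auto
  have e2: "AE x in M. real_cond_exp M F (\<lambda>y. (A y)\<^sup>2 + (B y)\<^sup>2 - (2 * B y) * A y) x
      = real_cond_exp M F (\<lambda>y. (A y)\<^sup>2 + (B y)\<^sup>2) x - real_cond_exp M F (\<lambda>y. (2 * B y) * A y) x"
    by (rule F.real_cond_exp_diff) (use A2i B2i BAi in auto)
  have e3: "AE x in M. real_cond_exp M F (\<lambda>y. (A y)\<^sup>2 + (B y)\<^sup>2) x
      = real_cond_exp M F (\<lambda>y. (A y)\<^sup>2) x + real_cond_exp M F (\<lambda>y. (B y)\<^sup>2) x"
    by (rule F.real_cond_exp_add[OF A2i B2i])
  have e4: "AE x in M. real_cond_exp M F (\<lambda>y. (B y)\<^sup>2) x = (B x)\<^sup>2"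
    by (rule F.real_cond_exp_F_meas[OF B2i]) auto
  have e5: "AE x in M. real_cond_exp M F (\<lambda>y. (2 * B y) * A y) x = (2 * B x) * real_cond_exp M F A x"
    by (rule F.real_cond_exp_mult[OF _ _ BAi]) auto
  have e6: "AE x in M. real_cond_exp M F A x = B x"
    unfolding A_def B_def by (rule F.real_cond_exp_nested_subalg[OF MG GF Xi])
  have j1: "AE x in M. (A x)\<^sup>2 \<le> real_cond_exp M G (\<lambda>y. (X y)\<^sup>2) x"
    unfolding A_def
    by (rule G.real_cond_exp_jensens_inequality(2)[OF Xi _ _ X2i convex_power2]) auto
  have j2: "AE x in M. real_cond_exp M F (\<lambda>y. (A y)\<^sup>2) x \<le> real_cond_exp M F (real_cond_exp M G (\<lambda>y. (X y)\<^sup>2)) x"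
    by (rule F.real_cond_exp_mono[OF j1 A2i]) (rule G.real_cond_exp_int(1)[OF X2i])
  have j3: "AE x in M. real_cond_exp M F (real_cond_exp M G (\<lambda>y. (X y)\<^sup>2)) x = real_cond_exp M F (\<lambda>y. (X y)\<^sup>2) x"
    by (rule F.real_cond_exp_nested_subalg[OF MG GF X2i])
  have j4: "AE x in M. real_cond_exp M F (\<lambda>y. (X y)\<^sup>2) x \<le> real_cond_exp M F (\<lambda>y. real m * (\<Sum>j\<in>J. (Y j y)\<^sup>2)) x"
    by (rule F.real_cond_exp_mono[OF _ X2i SYi]) (use X2 in \<open>auto intro!: AE_I2\<close>)
  have j5: "AE x in M. real_cond_exp M F (\<lambda>y. real m * (\<Sum>j\<in>J. (Y j y)\<^sup>2)) x = real m * real_cond_exp M F (\<lambda>y. (\<Sum>j\<in>J. (Y j y)\<^sup>2)) x"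
    by (rule F.real_cond_exp_cmult) (use Ysq in auto)
  have j6: "AE x in M. real_cond_exp M F (\<lambda>y. (\<Sum>j\<in>J. (Y j y)\<^sup>2)) x = (\<Sum>j\<in>J. real_cond_exp M F (\<lambda>y. (Y j y)\<^sup>2) x)"
    by (rule F.ce_sum'[OF Ysq])
  have part2: "AE x in M. real_cond_exp M F (\<lambda>y. (d y)\<^sup>2) x \<le> real m * (\<Sum>j\<in>J. real_cond_exp M F (\<lambda>y. (Y j y)\<^sup>2) x)"
    using e1 e2 e3 e4 e5 e6 j2 j3 j4 j5 j6
  proof eventually_elim
    case (elim x)
    have "0 \<le> (B x)\<^sup>2" by simp
    moreover have "(2 * B x) * real_cond_exp M F A x = 2 * (B x)\<^sup>2"
      using elim(6) by (simp add: power2_eq_square)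
    moreover have "real m * real_cond_exp M F (\<lambda>y. (\<Sum>j\<in>J. (Y j y)\<^sup>2)) x = real m * (\<Sum>j\<in>J. real_cond_exp M F (\<lambda>y. (Y j y)\<^sup>2) x)"
      using elim(11) by simp
    ultimately show ?case using elim(1-5) elim(7-10) by linarith
  qed
  show ?thesis using part1 part2 unfolding d_def by simp
qed


lemma filt_space: "space (nat_filtration M eps k) = space M"
  unfolding nat_filtration_def by (rule space_measure_of_conv)

lemma filt_sets: "sets (nat_filtration M eps k) =
   sigma_sets (space M) (\<Union>j\<in>{1..k}. {eps j -` A \<inter> space M | A. A \<in> sets borel})"
  unfolding nat_filtration_def by (rule sets_measure_of) auto

lemma filt_sub:
  assumes "\<And>j. j \<in> {1..k} \<Longrightarrow> eps j \<in> borel_measurable M"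
  shows "subalgebra M (nat_filtration M eps k)"
  unfolding subalgebra_def filt_space filt_sets
  by (auto intro!: sets.sigma_sets_subset measurable_sets assms)

lemma filt_nest:
  assumes "k \<le> l"
  shows "subalgebra (nat_filtration M eps l) (nat_filtration M eps k)"
  unfolding subalgebra_def filt_space filt_sets
  using assms by (simp, intro sigma_sets_mono' UN_mono) auto

theorem lemma2:
  fixes M :: "'a measure"
    and eps :: "nat \<Rightarrow> 'a \<Rightarrow> 'h::{real_inner, complete_space, second_countable_topology}"
    and W :: "nat \<Rightarrow> real"
    and n m i :: nat
  assumes "prob_space M"
    and meas: "\<And>j. j \<in> {1..n} \<Longrightarrow> eps j \<in> borel_measurable M"
    and sq: "\<And>j. j \<in> {1..n} \<Longrightarrow> integrable M (\<lambda>x. (norm (eps j x))\<^sup>2)"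
    and W_nonneg: "\<And>j. j \<in> {1..n} \<Longrightarrow> W j \<ge> 0"
    and "m \<ge> 1"
    and "1 \<le> i" and "i \<le> n"
  shows "(AE x in M. \<bar>real_cond_exp M (nat_filtration M eps i)
                          (\<lambda>y. norm (\<Sum>j=1..n. W j *\<^sub>R eps j y)) x
                 - real_cond_exp M (nat_filtration M eps (i-1))
                          (\<lambda>y. norm (\<Sum>j=1..n. W j *\<^sub>R eps j y)) x
                 - real_cond_exp M (nat_filtration M eps i)
                          (\<lambda>y. norm ((\<Sum>j=1..n. W j *\<^sub>R eps j y)
                                     - (\<Sum>j=i..min (i+m-1) n. W j *\<^sub>R eps j y))) x
                 + real_cond_exp M (nat_filtration M eps (i-1))
                          (\<lambda>y. norm ((\<Sum>j=1..n. W j *\<^sub>R eps j y)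
                                     - (\<Sum>j=i..min (i+m-1) n. W j *\<^sub>R eps j y))) x\<bar>
          \<le> (\<Sum>j=i..min (i+m-1) n. real_cond_exp M (nat_filtration M eps i)
                                      (\<lambda>y. norm (W j *\<^sub>R eps j y)) x)
          + (\<Sum>j=i..min (i+m-1) n. real_cond_exp M (nat_filtration M eps (i-1))
                                      (\<lambda>y. norm (W j *\<^sub>R eps j y)) x))
       \<and> (AE x in M. real_cond_exp M (nat_filtration M eps (i-1))
              (\<lambda>y. (real_cond_exp M (nat_filtration M eps i)
                          (\<lambda>z. norm (\<Sum>j=1..n. W j *\<^sub>R eps j z)) y
                 - real_cond_exp M (nat_filtration M eps (i-1))
                          (\<lambda>z. norm (\<Sum>j=1..n. W j *\<^sub>R eps j z)) y
                 - real_cond_exp M (nat_filtration M eps i)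
                          (\<lambda>z. norm ((\<Sum>j=1..n. W j *\<^sub>R eps j z)
                                     - (\<Sum>j=i..min (i+m-1) n. W j *\<^sub>R eps j z))) y
                 + real_cond_exp M (nat_filtration M eps (i-1))
                          (\<lambda>z. norm ((\<Sum>j=1..n. W j *\<^sub>R eps j z)
                                     - (\<Sum>j=i..min (i+m-1) n. W j *\<^sub>R eps j z))) y)\<^sup>2) x
          \<le> real m * (\<Sum>j=i..min (i+m-1) n. real_cond_exp M (nat_filtration M eps (i-1))
                                      (\<lambda>y. (norm (W j *\<^sub>R eps j y))\<^sup>2) x))"
proof -
  interpret P: prob_space M by (rule assms(1))
  define J where "J = {i..min (i+m-1) n}"
  have J: "\<And>j. j \<in> J \<Longrightarrow> j \<in> {1..n}" using assms(6) unfolding J_def by auto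
  have fin: "finite J" unfolding J_def by simp
  have cardJ: "card J \<le> m" unfolding J_def using \<open>m \<ge> 1\<close> by simp
  have MG: "subalgebra M (nat_filtration M eps i)"
    by (rule filt_sub) (use meas \<open>i \<le> n\<close> in auto)
  have GF: "subalgebra (nat_filtration M eps i) (nat_filtration M eps (i-1))"
    by (rule filt_nest) simp
  have ni: "integrable M (\<lambda>y. norm (eps j y))" if "j \<in> {1..n}" for j
  proof (rule Bochner_Integration.integrable_bound[OF Bochner_Integration.integrable_add[OF P.integrable_const[of 1] sq[OF that]]])
    show "AE x in M. norm (norm (eps j x)) \<le> norm (1 + (norm (eps j x))\<^sup>2)"
      by (intro AE_I2) (use abs_le_1_sq[of "norm (eps j _)"] in simp)
  qed (use meas[OF that] in auto)
  have nY: "integrable M (\<lambda>y. norm (W j *\<^sub>R eps j y))" if "j \<in> {1..n}" for j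
    using integrable_mult_right[OF ni[OF that], of "\<bar>W j\<bar>"] by simp
  have Ym: "(\<lambda>y. norm (W j *\<^sub>R eps j y)) \<in> borel_measurable M" if "j \<in> J" for j
    using meas[OF J[OF that]] by measurable
  have Ysq: "integrable M (\<lambda>y. (norm (W j *\<^sub>R eps j y))\<^sup>2)" if "j \<in> J" for j
    using integrable_mult_right[OF sq[OF J[OF that]], of "(W j)\<^sup>2"]
    by (simp add: power_mult_distrib)
  have Sm: "(\<lambda>y. \<Sum>j=1..n. W j *\<^sub>R eps j y) \<in> borel_measurable M"
    by (intro borel_measurable_sum borel_measurable_scaleR borel_measurable_const meas) auto
  have Dm: "(\<lambda>y. \<Sum>j=i..min (i+m-1) n. W j *\<^sub>R eps j y) \<in> borel_measurable M"
    using J unfolding J_def by (intro borel_measurable_sum borel_measurable_scaleR borel_measurable_const meas) auto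
  have SNi: "integrable M (\<lambda>y. \<Sum>j=1..n. norm (W j *\<^sub>R eps j y))"
    using nY by (intro Bochner_Integration.integrable_sum) auto
  have DNi: "integrable M (\<lambda>y. \<Sum>j\<in>J. norm (W j *\<^sub>R eps j y))"
    using nY J by (intro Bochner_Integration.integrable_sum) auto
  have si: "integrable M (\<lambda>y. norm (\<Sum>j=1..n. W j *\<^sub>R eps j y))"
    by (rule Bochner_Integration.integrable_bound[OF SNi])
       (use Sm in \<open>auto intro!: AE_I2 order_trans[OF norm_sum] simp del: norm_scaleR\<close>)
  have ti: "integrable M (\<lambda>y. norm ((\<Sum>j=1..n. W j *\<^sub>R eps j y) - (\<Sum>j=i..min (i+m-1) n. W j *\<^sub>R eps j y)))"
  proof (rule Bochner_Integration.integrable_bound[OF Bochner_Integration.integrable_add[OF SNi DNi]])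
    show "AE x in M. norm (norm ((\<Sum>j = 1..n. W j *\<^sub>R eps j x) - (\<Sum>j = i..min (i + m - 1) n. W j *\<^sub>R eps j x)))
         \<le> norm ((\<Sum>j = 1..n. norm (W j *\<^sub>R eps j x)) + (\<Sum>j\<in>J. norm (W j *\<^sub>R eps j x)))"
    proof (intro AE_I2)
      fix x
      have "norm ((\<Sum>j = 1..n. W j *\<^sub>R eps j x) - (\<Sum>j = i..min (i + m - 1) n. W j *\<^sub>R eps j x))
          \<le> norm (\<Sum>j = 1..n. W j *\<^sub>R eps j x) + norm (\<Sum>j\<in>J. W j *\<^sub>R eps j x)"
        unfolding J_def by (rule norm_triangle_ineq4)
      also have "\<dots> \<le> (\<Sum>j = 1..n. norm (W j *\<^sub>R eps j x)) + (\<Sum>j\<in>J. norm (W j *\<^sub>R eps j x))"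
        by (intro add_mono norm_sum)
      finally show "norm (norm ((\<Sum>j = 1..n. W j *\<^sub>R eps j x) - (\<Sum>j = i..min (i + m - 1) n. W j *\<^sub>R eps j x)))
         \<le> norm ((\<Sum>j = 1..n. norm (W j *\<^sub>R eps j x)) + (\<Sum>j\<in>J. norm (W j *\<^sub>R eps j x)))"
        by (simp del: norm_scaleR)
    qed
  qed (use Sm Dm in auto)
  have st: "\<bar>norm (\<Sum>j=1..n. W j *\<^sub>R eps j y) - norm ((\<Sum>j=1..n. W j *\<^sub>R eps j y) - (\<Sum>j=i..min (i+m-1) n. W j *\<^sub>R eps j y))\<bar>
      \<le> (\<Sum>j\<in>J. norm (W j *\<^sub>R eps j y))" for y
  proof -
    have "\<bar>norm (\<Sum>j=1..n. W j *\<^sub>R eps j y) - norm ((\<Sum>j=1..n. W j *\<^sub>R eps j y) - (\<Sum>j=i..min (i+m-1) n. W j *\<^sub>R eps j y))\<bar>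
       \<le> norm ((\<Sum>j=1..n. W j *\<^sub>R eps j y) - ((\<Sum>j=1..n. W j *\<^sub>R eps j y) - (\<Sum>j=i..min (i+m-1) n. W j *\<^sub>R eps j y)))"
      by (rule norm_triangle_ineq3)
    also have "\<dots> = norm (\<Sum>j\<in>J. W j *\<^sub>R eps j y)" unfolding J_def by simp
    also have "\<dots> \<le> (\<Sum>j\<in>J. norm (W j *\<^sub>R eps j y))" by (rule norm_sum)
    finally show ?thesis .
  qed
  show ?thesis
    using abstract_bound[OF assms(1) MG GF fin cardJ Ym Ysq si ti st] unfolding J_def .
qed

end
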